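(* Assume $\partial\Omega$ is $C^1$. For $x\in\bar\Omega$, let $$S_x=\{v\in\mathbb{R}^3\setminus\{0\}: v\cdot n(x_{\mathbf b}(x,v))=0\}.$$ Then $S_x$ has Lebesgue measure zero.
   Context: $\Omega=\{x\in\mathbb{R}^3:\xi(x)<0\}$ is connected and bounded, $\xi$ with $\nabla\xi\neq0$ on $\{\xi=0\}$, $n(x)=\nabla\xi(x)/|\nabla\xi(x)|$ the outward normal. For $x\in\bar\Omega$, $v\neq0$, the backward exit time is $t_{\mathbf b}(x,v)=\sup\{\tau\ge0: x-\tau v\in\bar\Omega\}$ and $x_{\mathbf b}(x,v)=x-t_{\mathbf b}(x,v)v\in\partial\Omega$. *)

theory Defs
  imports "HOL-Analysis.Analysis"
begin

definition t_b :: "(real^3) set \<Rightarrow> real^3 \<Rightarrow> real^3 \<Rightarrow> real" where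
  "t_b \<Omega> x v = Sup {\<tau>. \<tau> \<ge> 0 \<and> x - \<tau> *\<^sub>R v \<in> closure \<Omega>}"

definition x_b :: "(real^3) set \<Rightarrow> real^3 \<Rightarrow> real^3 \<Rightarrow> real^3" where
  "x_b \<Omega> x v = x - t_b \<Omega> x v *\<^sub>R v"

text \<open>Outward unit normal from a defining function with gradient field grad.\<close>

definition normal :: "(real^3 \<Rightarrow> real^3) \<Rightarrow> real^3 \<Rightarrow> real^3" where
  "normal grad y = grad y /\<^sub>R norm (grad y)"

end

theory Submission
  imports Defs
begin

lemma dir_bound:
  fixes \<xi> :: "real^3 \<Rightarrow> real" and grad :: "real^3 \<Rightarrow> real^3"
  assumes deriv: "\<And>y. (\<xi> has_derivative (\<lambda>h. grad y \<bullet> h)) (at y)"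
    and B: "convex B" and p: "p \<in> B" and q: "p + s *\<^sub>R e \<in> B"
    and ge: "\<And>w. w \<in> B \<Longrightarrow> grad w \<bullet> e \<ge> c"
  shows "c * \<bar>s\<bar> \<le> \<bar>\<xi> (p + s *\<^sub>R e) - \<xi> p\<bar>"
proof -
  define \<phi> where "\<phi> r = \<xi> (p + r *\<^sub>R e)" for r
  have D: "DERIV \<phi> r :> grad (p + r *\<^sub>R e) \<bullet> e" for r
  proof -
    have "((\<lambda>r. p + r *\<^sub>R e) has_derivative (\<lambda>h. h *\<^sub>R e)) (at r)"
      by (auto intro!: derivative_eq_intros)
    from has_derivative_compose[OF this deriv]
    have "(\<phi> has_derivative (\<lambda>h. grad (p + r *\<^sub>R e) \<bullet> (h *\<^sub>R e))) (at r)"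
      unfolding \<phi>_def by simp
    moreover have "(\<lambda>h. grad (p + r *\<^sub>R e) \<bullet> (h *\<^sub>R e)) = (*) (grad (p + r *\<^sub>R e) \<bullet> e)"
      by (auto simp: mult.commute)
    ultimately show ?thesis unfolding has_field_derivative_def by simp
  qed
  have inB: "p + r *\<^sub>R e \<in> B" if "0 \<le> r / s" "r / s \<le> 1" "s \<noteq> 0" for r
  proof -
    have "(1 - r/s) *\<^sub>R p + (r/s) *\<^sub>R (p + s *\<^sub>R e) \<in> B"
      using convexD[OF B p q, of "1 - r/s" "r/s"] that by simp
    moreover have "(1 - r/s) *\<^sub>R p + (r/s) *\<^sub>R (p + s *\<^sub>R e) = p + r *\<^sub>R e"
      using that by (simp add: algebra_simps)
    ultimately show ?thesis by simp
  qed
  consider "s = 0" | "s > 0" | "s < 0" by linarith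
  then show ?thesis
  proof cases
    case 1 then show ?thesis by simp
  next
    case 2
    obtain z where z: "0 < z" "z < s" "\<phi> s - \<phi> 0 = (s - 0) * (grad (p + z *\<^sub>R e) \<bullet> e)"
      using MVT2[OF 2, of \<phi> "\<lambda>r. grad (p + r *\<^sub>R e) \<bullet> e"] D by blast
    have "p + z *\<^sub>R e \<in> B" using inB[of z] z 2 by simp
    then have "c \<le> grad (p + z *\<^sub>R e) \<bullet> e" by (rule ge)
    then have "c * s \<le> s * (grad (p + z *\<^sub>R e) \<bullet> e)" using 2
      by (simp add: mult.commute mult_right_mono)
    moreover have "\<xi> (p + s *\<^sub>R e) - \<xi> p = s * (grad (p + z *\<^sub>R e) \<bullet> e)"
      using z unfolding \<phi>_def by simp
    ultimately show ?thesis using 2 abs_ge_self[of "s * (grad (p + z *\<^sub>R e) \<bullet> e)"]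
      by (smt (verit))
  next
    case 3
    obtain z where z: "s < z" "z < 0" "\<phi> 0 - \<phi> s = (0 - s) * (grad (p + z *\<^sub>R e) \<bullet> e)"
      using MVT2[OF 3, of \<phi> "\<lambda>r. grad (p + r *\<^sub>R e) \<bullet> e"] D by blast
    have "p + z *\<^sub>R e \<in> B" using inB[of z] z 3 by (simp add: divide_simps)
    then have "c \<le> grad (p + z *\<^sub>R e) \<bullet> e" by (rule ge)
    then have "c * (-s) \<le> (-s) * (grad (p + z *\<^sub>R e) \<bullet> e)" using 3
      by (simp add: mult.commute mult_right_mono)
    moreover have "\<xi> p - \<xi> (p + s *\<^sub>R e) = (-s) * (grad (p + z *\<^sub>R e) \<bullet> e)"
      using z unfolding \<phi>_def by simp
    ultimately show ?thesis using 3 abs_ge_self[of "-s * (grad (p + z *\<^sub>R e) \<bullet> e)"]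
      by (smt (verit))
  qed
qed


lemma tau_deriv:
  fixes \<xi> :: "real^3 \<Rightarrow> real" and grad :: "real^3 \<Rightarrow> real^3"
  assumes deriv: "\<And>y. (\<xi> has_derivative (\<lambda>h. grad y \<bullet> h)) (at y)"
    and B: "open B" "convex B" and e1: "norm e = 1" and c: "c > 0"
    and ge: "\<And>w. w \<in> B \<Longrightarrow> grad w \<bullet> e \<ge> c"
    and G: "\<And>y. y \<in> G \<Longrightarrow> y \<in> B \<and> \<xi> y = 0"
    and YT: "\<And>z. z \<in> T \<Longrightarrow> Y z \<in> G \<and> z = Y z + \<tau> z *\<^sub>R e"
    and z: "z \<in> T"
  shows "(\<tau> has_derivative (\<lambda>h. grad (Y z) \<bullet> h / (grad (Y z) \<bullet> e))) (at z within T)"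
proof -
  define y where "y = Y z"
  define a where "a = grad y"
  define k where "k = a \<bullet> e"
  define t where "t = \<tau> z"
  have yG: "y \<in> G" and zy: "z = y + t *\<^sub>R e" using YT[OF z] unfolding y_def t_def by auto
  have yB: "y \<in> B" and \<xi>y: "\<xi> y = 0" using G[OF yG] by auto
  have kc: "k \<ge> c" unfolding k_def a_def using ge[OF yB] .
  hence kpos: "k > 0" using c by linarith
  have bl: "bounded_linear (\<lambda>h. a \<bullet> h / k)"
    using bounded_linear_compose[OF bounded_linear_divide[of k] bounded_linear_inner_right[of a]] by simp
  have dx: "\<forall>\<eta>>0. \<exists>d>0. \<forall>y'. norm (y' - y) < d \<longrightarrow>
      norm (\<xi> y' - \<xi> y - a \<bullet> (y' - y)) \<le> \<eta> * norm (y' - y)"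
    using deriv[of y] unfolding has_derivative_within_alt a_def by auto
  obtain d0 where d0: "d0 > 0" "ball y d0 \<subseteq> B" using B(1) yB openE by blast
  obtain d1 where d1: "d1 > 0" "\<And>y'. norm (y' - y) < d1 \<Longrightarrow>
      norm (\<xi> y' - \<xi> y - a \<bullet> (y' - y)) \<le> 1 * norm (y' - y)"
    using dx by (meson zero_less_one)
  define M where "M = (norm a + 1) / c"
  have M0: "M \<ge> 0" unfolding M_def using c by simp
  have "\<forall>\<epsilon>>0. \<exists>d>0. \<forall>z'\<in>T. norm (z' - z) < d \<longrightarrow>
        norm (\<tau> z' - \<tau> z - a \<bullet> (z' - z) / k) \<le> \<epsilon> * norm (z' - z)"
  proof (intro allI impI)
    fix \<epsilon> :: real assume \<epsilon>: "\<epsilon> > 0"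
    have "\<epsilon> * k / (1 + M) > 0" using \<epsilon> kpos M0 by simp
    then obtain d2 where d2: "d2 > 0" "\<And>y'. norm (y' - y) < d2 \<Longrightarrow>
      norm (\<xi> y' - \<xi> y - a \<bullet> (y' - y)) \<le> (\<epsilon> * k / (1 + M)) * norm (y' - y)"
      using dx by blast
    define d where "d = min d0 (min d1 (d2 / (1 + M)))"
    have dpos: "d > 0" unfolding d_def using d0 d1 d2 M0 by simp
    show "\<exists>d>0. \<forall>z'\<in>T. norm (z' - z) < d \<longrightarrow>
        norm (\<tau> z' - \<tau> z - a \<bullet> (z' - z) / k) \<le> \<epsilon> * norm (z' - z)"
    proof (intro exI[of _ d] conjI ballI impI dpos)
      fix z' assume z': "z' \<in> T" and hz: "norm (z' - z) < d"
      define h where "h = z' - z"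
      define y' where "y' = Y z'"
      define \<sigma> where "\<sigma> = \<tau> z' - t"
      have y'G: "y' \<in> G" and zy': "z' = y' + \<tau> z' *\<^sub>R e" using YT[OF z'] unfolding y'_def by auto
      have y'B: "y' \<in> B" and \<xi>y': "\<xi> y' = 0" using G[OF y'G] by auto
      have hd: "norm h < d0" "norm h < d1" "norm h < d2 / (1 + M)"
        using hz unfolding h_def d_def by auto
      have yhB: "y + h \<in> B" using d0(2) hd(1) by (auto simp: dist_norm)
      have eq1: "y' + \<sigma> *\<^sub>R e = y + h"
        using zy zy' unfolding h_def \<sigma>_def by (simp add: algebra_simps)
      have "c * \<bar>\<sigma>\<bar> \<le> \<bar>\<xi> (y' + \<sigma> *\<^sub>R e) - \<xi> y'\<bar>"
        using dir_bound[OF deriv B(2) y'B _ ge, of \<sigma>] eq1 yhB by simp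
      then have s1: "c * \<bar>\<sigma>\<bar> \<le> \<bar>\<xi> (y + h)\<bar>" using eq1 \<xi>y' by simp
      have "\<bar>\<xi> (y + h) - \<xi> y - a \<bullet> h\<bar> \<le> norm h"
        using d1(2)[of "y + h"] hd(2) by simp
      moreover have "\<bar>a \<bullet> h\<bar> \<le> norm a * norm h" by (rule Cauchy_Schwarz_ineq2)
      ultimately have "\<bar>\<xi> (y + h)\<bar> \<le> (norm a + 1) * norm h" using \<xi>y
        by (simp add: algebra_simps)
      with s1 have "c * \<bar>\<sigma>\<bar> \<le> (norm a + 1) * norm h" by linarith
      then have s2: "\<bar>\<sigma>\<bar> \<le> M * norm h" unfolding M_def using c
        by (simp add: field_simps mult.commute)
      define dd where "dd = y' - y"
      have hdd: "h = dd + \<sigma> *\<^sub>R e" using eq1 unfolding dd_def by (simp add: algebra_simps)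
      have "norm dd \<le> norm h + norm (\<sigma> *\<^sub>R e)"
        using hdd norm_triangle_ineq4[of h "\<sigma> *\<^sub>R e"] by simp
      also have "\<dots> = norm h + \<bar>\<sigma>\<bar>" using e1 by simp
      finally have ndd: "norm dd \<le> (1 + M) * norm h" using s2 by (simp add: algebra_simps)
      have "(1 + M) * norm h < d2" using hd(3) M0 by (simp add: field_simps)
      with ndd have "norm dd < d2" by linarith
      then have "\<bar>a \<bullet> dd\<bar> \<le> (\<epsilon> * k / (1 + M)) * norm dd"
        using d2(2)[of y'] \<xi>y \<xi>y' unfolding dd_def by simp
      also have "\<dots> \<le> (\<epsilon> * k / (1 + M)) * ((1 + M) * norm h)"
        using ndd \<epsilon> kpos M0 by (intro mult_left_mono) auto
      also have "\<dots> = \<epsilon> * k * norm h" using M0 by (simp add: field_simps)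
      finally have add: "\<bar>a \<bullet> dd\<bar> \<le> \<epsilon> * k * norm h" .
      have "a \<bullet> h = a \<bullet> dd + \<sigma> * k" unfolding hdd k_def by (simp add: inner_add_right)
      then have "\<tau> z' - \<tau> z - a \<bullet> h / k = - (a \<bullet> dd) / k"
        using kpos unfolding \<sigma>_def t_def by (simp add: field_simps)
      then have "norm (\<tau> z' - \<tau> z - a \<bullet> h / k) = \<bar>a \<bullet> dd\<bar> / k" using kpos by simp
      also have "\<dots> \<le> \<epsilon> * norm h" using add kpos by (simp add: field_simps)
      finally show "norm (\<tau> z' - \<tau> z - a \<bullet> (z' - z) / k) \<le> \<epsilon> * norm (z' - z)"
        unfolding h_def .
    qed
  qed
  then show ?thesis unfolding has_derivative_within_alt using bl
    unfolding a_def k_def y_def by blast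
qed


lemma patch_negligible:
  fixes \<xi> :: "real^3 \<Rightarrow> real" and grad :: "real^3 \<Rightarrow> real^3"
  assumes deriv: "\<And>y. (\<xi> has_derivative (\<lambda>h. grad y \<bullet> h)) (at y)"
    and B: "open B" "convex B" and e1: "norm e = 1" and c: "c > 0"
    and ge: "\<And>w. w \<in> B \<Longrightarrow> grad w \<bullet> e \<ge> c"
  shows "negligible {v. \<exists>y\<in>B. \<xi> y = 0 \<and> (x - y) \<bullet> grad y = 0 \<and> (\<exists>s>0. v = s *\<^sub>R (x - y))}"
proof -
  define G where "G = {y\<in>B. \<xi> y = 0 \<and> (x - y) \<bullet> grad y = 0}"
  define T where "T = {z. \<exists>y\<in>G. \<exists>t. z = y + t *\<^sub>R e}"
  define Y where "Y z = (SOME y. y \<in> G \<and> (\<exists>t. z = y + t *\<^sub>R e))" for z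
  define \<tau> where "\<tau> z = (z - Y z) \<bullet> e" for z
  define f where "f z = exp (\<tau> z) *\<^sub>R (x - Y z)" for z
  have ee: "e \<bullet> e = 1" using e1 by (simp add: power2_norm_eq_inner[symmetric])
  have YT: "Y z \<in> G \<and> z = Y z + \<tau> z *\<^sub>R e" if "z \<in> T" for z
  proof -
    have "\<exists>y. y \<in> G \<and> (\<exists>t. z = y + t *\<^sub>R e)" using that unfolding T_def by blast
    then have "Y z \<in> G \<and> (\<exists>t. z = Y z + t *\<^sub>R e)" unfolding Y_def by (rule someI_ex)
    then obtain t where "Y z \<in> G" "z = Y z + t *\<^sub>R e" by blast
    moreover have "z - Y z = t *\<^sub>R e" using \<open>z = Y z + t *\<^sub>R e\<close> by (simp add: algebra_simps)
    then have "\<tau> z = t" unfolding \<tau>_def using ee by simp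
    ultimately show ?thesis by simp
  qed
  have G: "y \<in> B \<and> \<xi> y = 0" if "y \<in> G" for y using that unfolding G_def by auto
  have uniq: "y1 = y2" if "y1 \<in> G" "y2 \<in> G" "y1 + t1 *\<^sub>R e = y2 + t2 *\<^sub>R e" for y1 y2 t1 t2
  proof -
    have y2: "y2 = y1 + (t1 - t2) *\<^sub>R e" using that(3) by (simp add: algebra_simps)
    have "c * \<bar>t1 - t2\<bar> \<le> \<bar>\<xi> (y1 + (t1 - t2) *\<^sub>R e) - \<xi> y1\<bar>"
      using dir_bound[OF deriv B(2) G[OF that(1), THEN conjunct1] _ ge, of "t1 - t2"]
        G[OF that(2)] y2 by simp
    then have "c * \<bar>t1 - t2\<bar> \<le> 0" using G[OF that(1)] G[OF that(2)] y2 by simp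
    then have "t1 = t2" using c by (simp add: mult_le_0_iff)
    then show ?thesis using y2 by simp
  qed
  have cover: "{v. \<exists>y\<in>B. \<xi> y = 0 \<and> (x - y) \<bullet> grad y = 0 \<and> (\<exists>s>0. v = s *\<^sub>R (x - y))} \<subseteq> f ` T"
  proof
    fix v assume "v \<in> {v. \<exists>y\<in>B. \<xi> y = 0 \<and> (x - y) \<bullet> grad y = 0 \<and> (\<exists>s>0. v = s *\<^sub>R (x - y))}"
    then obtain y s where yG: "y \<in> G" and s: "s > 0" and v: "v = s *\<^sub>R (x - y)"
      unfolding G_def by blast
    define z where "z = y + ln s *\<^sub>R e"
    have zT: "z \<in> T" unfolding T_def z_def using yG by blast
    have Yz: "Y z = y" using uniq[OF yG YT[OF zT, THEN conjunct1], of "ln s" "\<tau> z"]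
      YT[OF zT] unfolding z_def by simp
    have "z - Y z = ln s *\<^sub>R e" using Yz by (simp add: z_def)
    then have "\<tau> z = ln s" unfolding \<tau>_def using ee by simp
    then have "f z = v" unfolding f_def Yz v using s by simp
    then show "v \<in> f ` T" using zT by blast
  qed
  define Q where "Q z h = grad (Y z) \<bullet> h / (grad (Y z) \<bullet> e)" for z h
  define f' where "f' z h = exp (\<tau> z) *\<^sub>R (0 - (h - Q z h *\<^sub>R e))
      + (Q z h * exp (\<tau> z)) *\<^sub>R (x - (z - \<tau> z *\<^sub>R e))" for z h
  have der: "(f has_derivative f' z) (at z within T)" if zT: "z \<in> T" for z
  proof -
    have td: "(\<tau> has_derivative Q z) (at z within T)"
      unfolding Q_def
      by (rule tau_deriv[OF deriv B e1 c ge G YT zT])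
    have "((\<lambda>z. exp (\<tau> z) *\<^sub>R (x - (z - \<tau> z *\<^sub>R e))) has_derivative f' z) (at z within T)"
      unfolding f'_def
      by (auto intro!: derivative_eq_intros td simp: algebra_simps)
    then show ?thesis
    proof (rule has_derivative_transform_within[OF _ zero_less_one zT])
      fix z' assume "z' \<in> T"
      then have "Y z' = z' - \<tau> z' *\<^sub>R e" using YT by (metis add_diff_cancel)
      then show "exp (\<tau> z') *\<^sub>R (x - (z' - \<tau> z' *\<^sub>R e)) = f z'" unfolding f_def by simp
    qed
  qed
  have rank: "rank (matrix (f' z)) < CARD(3)" if zT: "z \<in> T" for z
  proof -
    define a where "a = grad (Y z)"
    have YzG: "Y z \<in> G" and zY: "z - \<tau> z *\<^sub>R e = Y z" using YT[OF zT] by (auto simp: algebra_simps)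
    have "a \<bullet> e \<ge> c" unfolding a_def using ge G[OF YzG] by simp
    then have ae: "a \<bullet> e \<noteq> 0" and a0: "a \<noteq> 0" using c by auto
    have perp: "a \<bullet> (x - Y z) = 0" using YzG unfolding G_def a_def by (simp add: inner_commute)
    have bl: "bounded_linear (f' z)" using der[OF zT] has_derivative_bounded_linear by blast
    have "range (f' z) \<subseteq> {w. a \<bullet> w = 0}"
    proof clarify
      fix h
      have "a \<bullet> (h - Q z h *\<^sub>R e) = 0" unfolding Q_def a_def[symmetric] using ae
        by (simp add: inner_diff_right)
      then show "a \<bullet> f' z h = 0" unfolding f'_def zY
        using perp by (simp add: inner_add_right inner_diff_right)
    qed
    then have "dim (range (f' z)) \<le> dim {w. a \<bullet> w = 0}" by (rule dim_subset)
    also have "\<dots> = 2" using dim_hyperplane[OF a0] by simp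
    finally have "dim (range (f' z)) \<le> 2" .
    moreover have "rank (matrix (f' z)) = dim (range (f' z))"
      unfolding rank_dim_range matrix_vector_mul(3)[OF bl] ..
    ultimately show ?thesis by simp
  qed
  have "negligible (f ` T)"
    by (rule baby_Sard[OF _ der rank]) simp
  then show ?thesis using cover negligible_subset by blast
qed


lemma xb_props:
  fixes \<xi> :: "real^3 \<Rightarrow> real" and \<Omega> :: "(real^3) set"
  assumes cont: "continuous_on UNIV \<xi>"
    and Omega_def: "\<Omega> = {y. \<xi> y < 0}"
    and bdd: "bounded \<Omega>"
    and x_in: "x \<in> closure \<Omega>" and v: "v \<noteq> 0"
  shows "t_b \<Omega> x v \<ge> 0 \<and> \<xi> (x_b \<Omega> x v) = 0"
proof -
  define A where "A = {\<tau>. \<tau> \<ge> 0 \<and> x - \<tau> *\<^sub>R v \<in> closure \<Omega>}"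
  have tA: "t_b \<Omega> x v = Sup A" unfolding t_b_def A_def ..
  have 0: "0 \<in> A" unfolding A_def using x_in by simp
  obtain R where R: "\<And>y. y \<in> closure \<Omega> \<Longrightarrow> norm y \<le> R"
    using bounded_closure[OF bdd] unfolding bounded_iff by blast
  have ub: "\<tau> \<le> (norm x + R) / norm v" if "\<tau> \<in> A" for \<tau>
  proof -
    have t0: "\<tau> \<ge> 0" and m: "x - \<tau> *\<^sub>R v \<in> closure \<Omega>" using that unfolding A_def by auto
    have "\<tau> * norm v = norm (x - (x - \<tau> *\<^sub>R v))" using t0 by simp
    also have "\<dots> \<le> norm x + norm (x - \<tau> *\<^sub>R v)" by (rule norm_triangle_ineq4)
    also have "\<dots> \<le> norm x + R" using R[OF m] by simp
    finally show ?thesis using v by (simp add: field_simps)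
  qed
  have bddA: "bdd_above A" using ub by (auto simp: bdd_above_def)
  have cl: "continuous_on UNIV (\<lambda>\<tau>::real. x - \<tau> *\<^sub>R v)" by (intro continuous_intros)
  have "closed ({0..} \<inter> (\<lambda>\<tau>. x - \<tau> *\<^sub>R v) -` closure \<Omega>)"
    by (intro closed_Int closed_atLeast continuous_closed_vimage[OF closed_closure] ) (auto intro!: continuous_intros)
  moreover have "A = {0..} \<inter> (\<lambda>\<tau>. x - \<tau> *\<^sub>R v) -` closure \<Omega>" unfolding A_def by auto
  ultimately have clA: "closed A" by simp
  have SA: "Sup A \<in> A" using closed_contains_Sup[OF _ bddA clA] 0 by blast
  have t0: "t_b \<Omega> x v \<ge> 0" using SA tA unfolding A_def by simp
  have xbcl: "x_b \<Omega> x v \<in> closure \<Omega>" using SA tA unfolding A_def x_b_def by simp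
  have "closure \<Omega> \<subseteq> {y. \<xi> y \<le> 0}"
    by (rule closure_minimal) (auto simp: Omega_def intro!: closed_Collect_le cont continuous_intros)
  then have le: "\<xi> (x_b \<Omega> x v) \<le> 0" using xbcl by auto
  have "\<not> \<xi> (x_b \<Omega> x v) < 0"
  proof
    assume neg: "\<xi> (x_b \<Omega> x v) < 0"
    define g where "g \<tau> = \<xi> (x - \<tau> *\<^sub>R v)" for \<tau>
    have "continuous_on UNIV g" unfolding g_def
      by (intro continuous_on_compose2[OF cont] continuous_intros) auto
    then have "isCont g (Sup A)" by (simp add: continuous_on_eq_continuous_at)
    moreover have "g (Sup A) < 0" using neg tA unfolding g_def x_b_def by simp
    ultimately have "\<forall>\<^sub>F \<tau> in at (Sup A). g \<tau> < 0"
      unfolding isCont_def by (rule order_tendstoD(2))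
    then obtain d where d: "d > 0" "\<And>\<tau>. \<tau> \<noteq> Sup A \<Longrightarrow> dist \<tau> (Sup A) < d \<Longrightarrow> g \<tau> < 0"
      unfolding eventually_at by blast
    define \<tau> where "\<tau> = Sup A + d / 2"
    have "g \<tau> < 0" using d unfolding \<tau>_def by (intro d(2)) (auto simp: dist_real_def)
    then have "x - \<tau> *\<^sub>R v \<in> \<Omega>" unfolding g_def Omega_def by simp
    then have "x - \<tau> *\<^sub>R v \<in> closure \<Omega>" by (rule subsetD[OF closure_subset])
    moreover have "\<tau> \<ge> 0" using t0 tA d unfolding \<tau>_def by simp
    ultimately have "\<tau> \<in> A" unfolding A_def by simp
    then have "\<tau> \<le> Sup A" using bddA by (rule cSup_upper)
    then show False using d unfolding \<tau>_def by simp
  qed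
  with le t0 show ?thesis by linarith
qed


theorem mainTheorem12:
  fixes \<xi> :: "real^3 \<Rightarrow> real" and grad :: "real^3 \<Rightarrow> real^3"
    and \<Omega> :: "(real^3) set" and x :: "real^3"
  assumes deriv: "\<And>y. (\<xi> has_derivative (\<lambda>h. grad y \<bullet> h)) (at y)"
    and C1: "continuous_on UNIV grad"
    and nondeg: "\<And>y. \<xi> y = 0 \<Longrightarrow> grad y \<noteq> 0"
    and Omega_def: "\<Omega> = {y. \<xi> y < 0}"
    and conn: "connected \<Omega>"
    and bdd: "bounded \<Omega>"
    and x_in: "x \<in> closure \<Omega>"
  shows "{v. v \<noteq> 0 \<and> v \<bullet> normal grad (x_b \<Omega> x v) = 0} \<in> null_sets lebesgue"
proof -
  have cont: "continuous_on UNIV \<xi>"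
    using deriv has_derivative_continuous continuous_at_imp_continuous_on by blast
  define F where "F = {B. \<exists>p r. B = ball p r \<and> (\<exists>e c. norm e = 1 \<and> c > 0 \<and> (\<forall>w\<in>B. c \<le> grad w \<bullet> e))}"
  define P where "P B = {v. \<exists>y\<in>B. \<xi> y = 0 \<and> (x - y) \<bullet> grad y = 0 \<and> (\<exists>s>0. v = s *\<^sub>R (x - y))}" for B
  have Fopen: "open B" if "B \<in> F" for B using that unfolding F_def by auto
  obtain F' where F': "F' \<subseteq> F" "countable F'" "\<Union>F' = \<Union>F"
    using Lindelof[of F, OF Fopen] by metis
  have PF: "negligible (P B)" if BF: "B \<in> F" for B
  proof -
    obtain p r e c where pr: "B = ball p r" and e1: "norm e = 1" and c: "c > 0"
       and ge: "\<forall>w\<in>B. c \<le> grad w \<bullet> e"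
      using BF unfolding F_def by blast
    have "open B" "convex B" unfolding pr by auto
    then show ?thesis unfolding P_def
      by (rule patch_negligible[OF deriv _ _ e1 c]) (use ge in blast)
  qed
  have Gam: "y \<in> \<Union>F" if "\<xi> y = 0" for y
  proof -
    define g where "g = grad y"
    have g0: "g \<noteq> 0" using nondeg[OF that] unfolding g_def .
    define e where "e = g /\<^sub>R norm g"
    define c where "c = norm g / 2"
    have e1: "norm e = 1" unfolding e_def using g0 by simp
    have c0: "c > 0" unfolding c_def using g0 by simp
    have "isCont grad y" using C1 by (simp add: continuous_on_eq_continuous_at)
    then obtain r where r: "r > 0" "\<And>w. dist w y < r \<Longrightarrow> dist (grad w) (grad y) < c"
      using c0 unfolding continuous_at_eps_delta by blast
    have "c \<le> grad w \<bullet> e" if "w \<in> ball y r" for w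
    proof -
      have d: "norm (grad w - g) < c" using r(2)[of w] that unfolding g_def
        by (simp add: dist_norm norm_minus_commute)
      have "g \<bullet> e = norm g" unfolding e_def using g0
        by (simp add: power2_norm_eq_inner[symmetric] power2_eq_square)
      moreover have "\<bar>(grad w - g) \<bullet> e\<bar> \<le> norm (grad w - g)"
        using Cauchy_Schwarz_ineq2[of "grad w - g" e] e1 by simp
      moreover have "grad w \<bullet> e = g \<bullet> e + (grad w - g) \<bullet> e" by (simp add: inner_diff_left)
      ultimately show ?thesis using d e1 unfolding c_def by linarith
    qed
    then have "ball y r \<in> F" unfolding F_def using e1 c0 by blast
    moreover have "y \<in> ball y r" using r(1) by simp
    ultimately show ?thesis by blast
  qed
  define H where "H = (if \<xi> x = 0 then {v. grad x \<bullet> v = 0} else {})"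
  have negH: "negligible H"
  proof (cases "\<xi> x = 0")
    case True
    then show ?thesis unfolding H_def using negligible_hyperplane[of "grad x" 0] nondeg[OF True] by simp
  next
    case False
    then show ?thesis unfolding H_def by simp
  qed
  have sub: "{v. v \<noteq> 0 \<and> v \<bullet> normal grad (x_b \<Omega> x v) = 0} \<subseteq> H \<union> \<Union>(P ` F')"
  proof
    fix v assume "v \<in> {v. v \<noteq> 0 \<and> v \<bullet> normal grad (x_b \<Omega> x v) = 0}"
    then have v0: "v \<noteq> 0" and vn: "v \<bullet> normal grad (x_b \<Omega> x v) = 0" by auto
    define t where "t = t_b \<Omega> x v"
    define y where "y = x_b \<Omega> x v"
    have t0: "t \<ge> 0" and \<xi>y: "\<xi> y = 0"
      using xb_props[OF cont Omega_def bdd x_in v0] unfolding t_def y_def by auto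
    have gy: "grad y \<noteq> 0" using nondeg[OF \<xi>y] .
    have vg: "v \<bullet> grad y = 0" using vn gy unfolding normal_def y_def[symmetric] by simp
    have yx: "y = x - t *\<^sub>R v" unfolding y_def t_def x_b_def ..
    show "v \<in> H \<union> \<Union>(P ` F')"
    proof (cases "t = 0")
      case True
      then have "y = x" using yx by simp
      then show ?thesis using vg \<xi>y unfolding H_def by (simp add: inner_commute)
    next
      case False
      then have tp: "t > 0" using t0 by simp
      obtain B where B: "B \<in> F'" "y \<in> B" using Gam[OF \<xi>y] F'(3) by auto
      have "(x - y) \<bullet> grad y = 0" using yx vg by simp
      moreover have "v = (1 / t) *\<^sub>R (x - y)" using yx tp by simp
      ultimately have "\<xi> y = 0 \<and> (x - y) \<bullet> grad y = 0 \<and> (\<exists>s>0. v = s *\<^sub>R (x - y))"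
        using \<xi>y tp by (intro conjI exI[of _ "1 / t"]) auto
      then have "v \<in> P B" unfolding P_def using B(2) by (intro CollectI bexI[of _ y])
      then show ?thesis using B(1) by blast
    qed
  qed
  have "negligible (H \<union> \<Union>(P ` F'))"
  proof (rule negligible_Un[OF negH])
    have "countable (P ` F')" using F'(2) by simp
    moreover have "\<And>S. S \<in> P ` F' \<Longrightarrow> negligible S" using PF F'(1) by blast
    ultimately show "negligible (\<Union>(P ` F'))" by (rule negligible_countable_Union)
  qed
  then have "negligible {v. v \<noteq> 0 \<and> v \<bullet> normal grad (x_b \<Omega> x v) = 0}"
    by (rule negligible_subset[OF _ sub])
  then show ?thesis unfolding negligible_iff_null_sets .
qed

end
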